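(* Let $p$ be a set partition with $N(p)\ge 3$ distinct letters and length $|p|\le 2N(p)$. If $\phi_{aba}^{N(p)-1}(p)$ is not sorted, then $p$ is equivalent to the set partition $(a_1a_2\cdots a_{N(p)})^2 = a_1a_2\cdots a_{N(p)}a_1a_2\cdots a_{N(p)}$, where $a_1,\dots,a_{N(p)}$ are distinct letters.
   Context: A set partition is a finite word $p=p_1p_2\cdots p_n$ over an alphabet $A$ (letters may repeat). Its length is $|p|=n$ and $N(p)$ denotes the number of distinct letters occurring in $p$. A set partition is sorted if, for every letter, all occurrences of that letter appear consecutively. Two set partitions $p=p_1\cdots p_n$ and $q=q_1\cdots q_n$ are equivalent if there is a bijection $f:A\to A$ with $q=f(p_1)f(p_2)\cdots f(p_n)$. A word contains the pattern $aba$ if it has a (not necessarily contiguous) subsequence $xyz$ with $x=z\neq y$; otherwise it avoids $aba$. The map $\phi_{aba}$ (Xia's deterministic stack-sorting map for set partitions) is defined as follows. Start with the input $p$, an empty stack, and an empty output. Repeat: if the input is nonempty and pushing its leftmost letter onto the top of the stack would leave the stack contents (read from top to bottom) avoiding the pattern $aba$, then remove that letter from the input and push it onto the stack; otherwise pop the top letter of the stack and append it to the right end of the output. Stop when both input and stack are empty; $\phi_{aba}(p)$ is the output word. For example, $\phi_{aba}(abcac)=cbcaa$. $\phi_{aba}^k$ denotes the $k$-fold iterate. *)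

theory Defs
  imports Main
begin

text \<open>Set partitions are words (lists) over an alphabet of type 'a.\<close>

definition num_letters :: "'a list \<Rightarrow> nat" where
  "num_letters p = card (set p)"

definition contains_aba :: "'a list \<Rightarrow> bool" where
  "contains_aba w \<longleftrightarrow> (\<exists>i j k. i < j \<and> j < k \<and> k < length w \<and>
      w ! i = w ! k \<and> w ! i \<noteq> w ! j)"

definition avoids_aba :: "'a list \<Rightarrow> bool" where
  "avoids_aba w \<longleftrightarrow> \<not> contains_aba w"

definition sorted_partition :: "'a list \<Rightarrow> bool" where
  "sorted_partition w \<longleftrightarrow> (\<forall>i j k. i < j \<and> j < k \<and> k < length w \<and> w ! i = w ! k \<longrightarrow> w ! j = w ! i)"

definition equivalent :: "'a list \<Rightarrow> 'a list \<Rightarrow> bool" where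
  "equivalent p q \<longleftrightarrow> (\<exists>f. bij f \<and> q = map f p)"

text \<open>The stack is a list whose head is the top.\<close>
function stack_run :: "'a list \<Rightarrow> 'a list \<Rightarrow> 'a list" where
  "stack_run inp st =
     (case inp of
        c # rest \<Rightarrow>
          if avoids_aba (c # st) then stack_run rest (c # st)
          else (case st of [] \<Rightarrow> [] | t # st' \<Rightarrow> t # stack_run inp st')
      | [] \<Rightarrow> (case st of [] \<Rightarrow> [] | t # st' \<Rightarrow> t # stack_run [] st'))"
  by pat_completeness auto
termination
  by (relation "measure (\<lambda>(inp, st). 2 * length inp + length st)") auto

definition phi_aba :: "'a list \<Rightarrow> 'a list" where
  "phi_aba p = stack_run p []"

end

theory Submission
  imports Defs
begin


fun srt :: "'a list \<Rightarrow> bool" where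
  "srt [] = True"
| "srt (x # xs) = (srt xs \<and> (x \<in> set xs \<longrightarrow> x = hd xs))"

lemma contains_Cons:
  "contains_aba (x # xs) \<longleftrightarrow> contains_aba xs \<or>
     (\<exists>j k. j < k \<and> k < length xs \<and> xs ! k = x \<and> xs ! j \<noteq> x)"
proof
  assume "contains_aba (x # xs)"
  then obtain i j k where h: "i < j" "j < k" "k < length (x#xs)" "(x#xs) ! i = (x#xs) ! k" "(x#xs) ! i \<noteq> (x#xs) ! j"
    unfolding contains_aba_def by blast
  show "contains_aba xs \<or> (\<exists>j k. j < k \<and> k < length xs \<and> xs ! k = x \<and> xs ! j \<noteq> x)"
  proof (cases i)
    case 0
    obtain j' where j': "j = Suc j'" using h(1) by (cases j) auto
    obtain k' where k': "k = Suc k'" using h(1,2) by (cases k) auto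
    have "j' < k'" "k' < length xs" "xs ! k' = x" "xs ! j' \<noteq> x" using h 0 j' k' by auto
    then show ?thesis by blast
  next
    case (Suc i')
    obtain j' where j': "j = Suc j'" using h(1) Suc by (cases j) auto
    obtain k' where k': "k = Suc k'" using h(1,2) by (cases k) auto
    have "contains_aba xs" using h Suc j' k' unfolding contains_aba_def
      by (intro exI[of _ i'] exI[of _ j'] exI[of _ k']) auto
    then show ?thesis by blast
  qed
next
  assume "contains_aba xs \<or> (\<exists>j k. j < k \<and> k < length xs \<and> xs ! k = x \<and> xs ! j \<noteq> x)"
  then show "contains_aba (x # xs)"
  proof
    assume "contains_aba xs"
    then obtain i j k where h: "i < j" "j < k" "k < length xs" "xs ! i = xs ! k" "xs ! i \<noteq> xs ! j"
      unfolding contains_aba_def by blast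
    then show ?thesis unfolding contains_aba_def
      by (intro exI[of _ "Suc i"] exI[of _ "Suc j"] exI[of _ "Suc k"]) auto
  next
    assume "\<exists>j k. j < k \<and> k < length xs \<and> xs ! k = x \<and> xs ! j \<noteq> x"
    then obtain j k where h: "j < k" "k < length xs" "xs ! k = x" "xs ! j \<noteq> x" by blast
    then show ?thesis unfolding contains_aba_def
      by (intro exI[of _ 0] exI[of _ "Suc j"] exI[of _ "Suc k"]) auto
  qed
qed

lemma avoids_srt: "avoids_aba xs \<longleftrightarrow> srt xs"
proof (induction xs)
  case Nil
  then show ?case by (simp add: avoids_aba_def contains_aba_def)
next
  case (Cons x xs)
  show ?case
  proof (cases "srt xs")
    case False
    then show ?thesis using Cons by (simp add: avoids_aba_def contains_Cons)
  next
    case True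
    then have nc: "\<not> contains_aba xs" using Cons by (simp add: avoids_aba_def)
    have "(\<exists>j k. j < k \<and> k < length xs \<and> xs ! k = x \<and> xs ! j \<noteq> x) \<longleftrightarrow> (x \<in> set xs \<and> x \<noteq> hd xs)"
    proof
      assume "\<exists>j k. j < k \<and> k < length xs \<and> xs ! k = x \<and> xs ! j \<noteq> x"
      then obtain j k where h: "j < k" "k < length xs" "xs ! k = x" "xs ! j \<noteq> x" by blast
      have "x \<in> set xs" using h by auto
      moreover have "x \<noteq> hd xs"
      proof
        assume hx: "x = hd xs"
        have "xs \<noteq> []" using h by auto
        then have "xs ! 0 = x" using hx by (simp add: hd_conv_nth)
        then have "j > 0" using h by (cases j) auto
        then have "contains_aba xs" unfolding contains_aba_def using h \<open>xs ! 0 = x\<close>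
          by (intro exI[of _ 0] exI[of _ j] exI[of _ k]) auto
        then show False using nc by simp
      qed
      ultimately show "x \<in> set xs \<and> x \<noteq> hd xs" by simp
    next
      assume h: "x \<in> set xs \<and> x \<noteq> hd xs"
      then obtain k where k: "k < length xs" "xs ! k = x" by (meson in_set_conv_nth)
      have "xs \<noteq> []" using h by auto
      then have "k \<noteq> 0" using h k by (metis hd_conv_nth)
      then show "\<exists>j k. j < k \<and> k < length xs \<and> xs ! k = x \<and> xs ! j \<noteq> x"
        using k h \<open>xs \<noteq> []\<close> by (metis hd_conv_nth neq0_conv)
    qed
    then show ?thesis using nc True by (auto simp: avoids_aba_def contains_Cons)
  qed
qed

lemma sorted_avoids: "sorted_partition xs \<longleftrightarrow> avoids_aba xs"
  unfolding avoids_aba_def contains_aba_def sorted_partition_def by metis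

lemma sorted_srt: "sorted_partition xs \<longleftrightarrow> srt xs"
  using sorted_avoids avoids_srt by metis

lemma contains_rev: "contains_aba (rev xs) \<Longrightarrow> contains_aba xs"
proof -
  assume "contains_aba (rev xs)"
  then obtain i j k where h: "i < j" "j < k" "k < length xs" "rev xs ! i = rev xs ! k" "rev xs ! i \<noteq> rev xs ! j"
    unfolding contains_aba_def by auto
  have r: "rev xs ! i = xs ! (length xs - Suc i)" "rev xs ! j = xs ! (length xs - Suc j)"
      "rev xs ! k = xs ! (length xs - Suc k)" using h by (simp_all add: rev_nth)
  have a: "length xs - Suc k < length xs - Suc j" "length xs - Suc j < length xs - Suc i"
       "length xs - Suc i < length xs" using h by auto
  have b: "xs ! (length xs - Suc k) = xs ! (length xs - Suc i)" 
      "xs ! (length xs - Suc k) \<noteq> xs ! (length xs - Suc j)" using h(4,5) r by simp_all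
  show ?thesis unfolding contains_aba_def using a b by blast
qed

lemma srt_rev: "srt (rev xs) \<longleftrightarrow> srt xs"
proof -
  have "contains_aba xs \<longleftrightarrow> contains_aba (rev xs)" using contains_rev[of xs] contains_rev[of "rev xs"] by auto
  then show ?thesis using avoids_srt[of xs] avoids_srt[of "rev xs"] unfolding avoids_aba_def by simp
qed

lemma srt_appendD2: "srt (xs @ ys) \<Longrightarrow> srt ys"
  by (induction xs) auto

lemma srt_append: "srt xs \<Longrightarrow> srt ys \<Longrightarrow> set xs \<inter> set ys = {} \<Longrightarrow> srt (xs @ ys)"
  by (induction xs) (auto simp: hd_append)

lemma distinct_srt: "distinct xs \<Longrightarrow> srt xs"
  by (induction xs) auto

lemma srt_aba: "srt (xs @ y # ys) \<Longrightarrow> x \<in> set xs \<Longrightarrow> x \<in> set ys \<Longrightarrow> x \<noteq> y \<Longrightarrow> False"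
proof (induction xs)
  case Nil then show ?case by simp
next
  case (Cons a xs)
  show ?case
  proof (cases "a = x")
    case True
    then have "hd (xs @ y # ys) = x" using Cons by auto
    then show ?thesis using Cons True
      by (cases xs) auto
  next
    case False
    then show ?thesis using Cons by auto
  qed
qed




declare stack_run.simps[simp del]

lemma sr_nil: "stack_run [] st = st"
  by (induction st) (subst stack_run.simps, simp)+

lemma sr_push: "srt (c # st) \<Longrightarrow> stack_run (c # r) st = stack_run r (c # st)"
  by (subst stack_run.simps) (simp add: avoids_srt)

lemma sr_pop: "\<not> srt (c # t # s) \<Longrightarrow> stack_run (c # r) (t # s) = t # stack_run (c # r) s"
  by (subst stack_run.simps) (simp add: avoids_srt del: srt.simps)

function re :: "'a list \<Rightarrow> 'a list \<Rightarrow> nat" where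
  "re [] st = 0"
| "re (c # r) st = (if srt (c # st) then re r (c # st) else
     (case st of [] \<Rightarrow> 0 | t # s \<Rightarrow> (if s \<noteq> [] \<and> hd s = c then 1 else 0) + re (c # r) s))"
  by pat_completeness auto
termination
  by (relation "measure (\<lambda>(inp, st). 2 * length inp + length st)") auto

declare re.simps(2)[simp del]

lemma re_push: "srt (c # st) \<Longrightarrow> re (c # r) st = re r (c # st)"
  by (simp add: re.simps(2) del: srt.simps)

lemma re_pop: "\<not> srt (c # t # s) \<Longrightarrow> re (c # r) (t # s) = (if s \<noteq> [] \<and> hd s = c then 1 else 0) + re (c # r) s"
  by (simp add: re.simps(2) del: srt.simps)

fun rc :: "'a list \<Rightarrow> nat" where
  "rc [] = 0"
| "rc [x] = 1"
| "rc (x # y # zs) = (if x = y then 0 else 1) + rc (y # zs)"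

lemma rc_Cons: "rc (x # xs) = (if xs \<noteq> [] \<and> hd xs = x then 0 else 1) + rc xs"
  by (cases xs) auto

declare rc.simps(2,3)[simp del]

lemma rc_le_length: "rc xs \<le> length xs"
  by (induction xs) (auto simp: rc_Cons)

lemma card_le_rc: "card (set xs) \<le> rc xs"
proof (induction xs)
  case Nil then show ?case by simp
next
  case (Cons x xs)
  show ?case
  proof (cases "x \<in> set xs")
    case True
    then show ?thesis using Cons by (simp add: rc_Cons insert_absorb)
  next
    case False
    then show ?thesis using Cons by (cases xs) (auto simp: rc_Cons)
  qed
qed

lemma srt_rc: "srt xs \<Longrightarrow> rc xs = card (set xs)"
proof (induction xs)
  case Nil then show ?case by simp
next
  case (Cons x xs)
  show ?case
  proof (cases "x \<in> set xs")
    case True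
    then have "xs \<noteq> [] \<and> hd xs = x" using Cons by auto
    then show ?thesis using Cons True by (simp add: rc_Cons insert_absorb)
  next
    case False
    then show ?thesis using Cons by (cases xs) (auto simp: rc_Cons)
  qed
qed

lemma rc_srt: "rc xs = card (set xs) \<Longrightarrow> srt xs"
proof (induction xs)
  case Nil then show ?case by simp
next
  case (Cons x xs)
  have le: "card (set xs) \<le> rc xs" by (rule card_le_rc)
  show ?case
  proof (cases "x \<in> set xs")
    case True
    then have "rc (x # xs) = card (set xs)" using Cons.prems by (simp add: insert_absorb)
    then have "xs \<noteq> [] \<and> hd xs = x" "rc xs = card (set xs)" using le
      by (auto simp: rc_Cons split: if_splits)
    then show ?thesis using Cons by simp
  next
    case False
    then show ?thesis using Cons by (cases xs) (auto simp: rc_Cons)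
  qed
qed

lemma unsrt_rc: "\<not> srt xs \<Longrightarrow> card (set xs) + 1 \<le> rc xs"
  using card_le_rc[of xs] rc_srt[of xs] by linarith

lemma distinct_rc: "distinct xs \<Longrightarrow> rc xs = length xs"
  using srt_rc[OF distinct_srt] distinct_card by metis

lemma rc_append: "rc (xs @ ys) + (if xs \<noteq> [] \<and> ys \<noteq> [] \<and> last xs = hd ys then 1 else 0) = rc xs + rc ys"
proof (induction xs)
  case Nil then show ?case by simp
next
  case (Cons x xs)
  show ?case
  proof (cases "xs = []")
    case True
    then show ?thesis by (cases ys) (auto simp: rc_Cons)
  next
    case False
    then show ?thesis using Cons by (auto simp: rc_Cons hd_append)
  qed
qed

lemma set_sr: "set (stack_run inp st) = set inp \<union> set st"
proof (induction inp st rule: re.induct)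
  case (1 st) then show ?case by (simp add: sr_nil)
next
  case (2 c r st)
  show ?case
  proof (cases "srt (c # st)")
    case True
    then show ?thesis using 2 by (simp add: sr_push)
  next
    case False
    then obtain t s where st: "st = t # s" by (cases st) auto
    then show ?thesis using 2 False by (auto simp: sr_pop)
  qed
qed

lemma pot: "srt st \<Longrightarrow> rc (stack_run inp st) + (if inp \<noteq> [] \<and> st \<noteq> [] \<and> hd inp = hd st then 1 else 0) + re inp st \<le> rc inp + rc st"
proof (induction inp st rule: re.induct)
  case (1 st) then show ?case by (simp add: sr_nil)
next
  case (2 c r st)
  show ?case
  proof (cases "srt (c # st)")
    case True
    have ih: "rc (stack_run r (c # st)) + (if r \<noteq> [] \<and> hd r = c then 1 else 0) + re r (c # st) \<le> rc r + rc (c # st)"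
      using 2(1)[OF True True] by simp
    have e1: "stack_run (c # r) st = stack_run r (c # st)" using True by (rule sr_push)
    have e2: "re (c # r) st = re r (c # st)" using True by (rule re_push)
    have e3: "rc (c # r) = (if r \<noteq> [] \<and> hd r = c then 0 else 1) + rc r" by (rule rc_Cons)
    have e4: "rc (c # st) = (if st \<noteq> [] \<and> hd st = c then 0 else 1) + rc st" by (rule rc_Cons)
    have e5: "(if c # r \<noteq> [] \<and> st \<noteq> [] \<and> hd (c # r) = hd st then 1 else 0) = (if st \<noteq> [] \<and> hd st = c then 1 else (0::nat))"
      by auto
    have ifarith: "\<And>x y a b A B. (x::nat) + (if A then 1 else 0) + y \<le> a + ((if B then 0 else 1) + b) \<Longrightarrow> x + (if B then 1 else 0) + y \<le> (if A then 0 else 1) + a + b"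
      by (case_tac A; case_tac B) auto
    have ih2: "rc (stack_run r (c # st)) + (if r \<noteq> [] \<and> hd r = c then 1 else 0) + re r (c # st) \<le> rc r + ((if st \<noteq> [] \<and> hd st = c then 0 else 1) + rc st)"
      using ih unfolding e4 .
    show ?thesis unfolding e1 e2 e5 e3 by (rule ifarith[OF ih2])
  next
    case False
    then obtain t s where st: "st = t # s" by (cases st) auto
    have ct: "c \<noteq> t" "c \<in> set s" using False 2(3) st by auto
    have ss: "srt s" using 2(3) st by simp
    have ih: "rc (stack_run (c # r) s) + (if s \<noteq> [] \<and> c = hd s then 1 else 0) + re (c # r) s \<le> rc (c # r) + rc s"
      using 2(2)[OF False st ss] by simp
    define Y where "Y = stack_run (c # r) s"
    have eq1: "stack_run (c # r) st = t # Y" using False st by (simp add: sr_pop Y_def)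
    have eq2: "re (c # r) st = (if s \<noteq> [] \<and> hd s = c then 1 else 0) + re (c # r) s" using False st by (simp add: re_pop)
    have z: "(if c # r \<noteq> [] \<and> st \<noteq> [] \<and> hd (c # r) = hd st then 1 else 0) = (0::nat)" using st ct by simp
    have rcY: "rc (t # Y) \<le> 1 + rc Y" by (simp add: rc_Cons)
    have ih': "rc Y + (if s \<noteq> [] \<and> c = hd s then 1 else 0) + re (c # r) s \<le> rc (c # r) + rc s"
      using ih Y_def by simp
    show ?thesis
    proof (cases "s \<noteq> [] \<and> hd s = t")
      case True
      then obtain s' where s': "s = t # s'" by (cases s) auto
      have "\<not> srt (c # t # s')" using ct s' by auto
      then have Yt: "Y = t # stack_run (c # r) s'" using s' by (simp add: sr_pop Y_def)
      then have a: "rc (t # Y) = rc Y" by (simp add: rc_Cons)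
      have b: "rc (t # s) = rc s" using s' by (simp add: rc_Cons)
      have c: "re (c # r) st = re (c # r) s" using eq2 s' ct by simp
      have d: "rc Y + re (c # r) s \<le> rc (c # r) + rc s" using ih' s' ct by simp
      show ?thesis unfolding eq1 z c using a b d st by simp
    next
      case False
      then have b: "rc (t # s) = 1 + rc s" by (simp add: rc_Cons)
      show ?thesis
      proof (cases "s \<noteq> [] \<and> hd s = c")
        case True
        have c: "re (c # r) st = 1 + re (c # r) s" using eq2 True by simp
        have d: "rc Y + 1 + re (c # r) s \<le> rc (c # r) + rc s" using ih' True by simp
        show ?thesis unfolding eq1 z c using b d rcY st by simp
      next
        case False
        have c: "re (c # r) st = re (c # r) s" using eq2 False by simp
        have d: "rc Y + re (c # r) s \<le> rc (c # r) + rc s" using ih' False by auto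
        show ?thesis unfolding eq1 z c using b d rcY st by simp
      qed
    qed
  qed
qed

lemma re_pos_stack: "srt st \<Longrightarrow> c \<in> set st \<Longrightarrow> c \<noteq> hd st \<Longrightarrow> re (c # r) st \<ge> 1"
proof (induction st)
  case Nil then show ?case by simp
next
  case (Cons t s)
  have ct: "c \<noteq> t" using Cons.prems(3) by simp
  have cs: "c \<in> set s" using Cons.prems(2) ct by simp
  have ss: "srt s" using Cons.prems(1) by simp
  have ns: "\<not> srt (c # t # s)" using ct cs by simp
  have eq: "re (c # r) (t # s) = (if s \<noteq> [] \<and> hd s = c then 1 else 0) + re (c # r) s"
    using ns by (rule re_pop)
  show ?case
  proof (cases "s \<noteq> [] \<and> hd s = c")
    case True then show ?thesis unfolding eq by simp
  next
    case False
    then have "c \<noteq> hd s" using cs by auto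
    then have "re (c # r) s \<ge> 1" using Cons.IH ss cs by blast
    then show ?thesis unfolding eq by simp
  qed
qed

lemma re_zero_srt: "srt st \<Longrightarrow> re inp st = 0 \<Longrightarrow> srt (rev st @ inp)"
proof (induction inp arbitrary: st)
  case Nil then show ?case by (simp add: srt_rev)
next
  case (Cons c r)
  show ?case
  proof (cases "srt (c # st)")
    case True
    have "re (c # r) st = re r (c # st)" using True by (rule re_push)
    then have "re r (c # st) = 0" using Cons.prems(2) by simp
    then have "srt (rev (c # st) @ r)" using Cons.IH True by blast
    then show ?thesis by simp
  next
    case False
    have ss: "srt st" by (rule Cons.prems(1))
    have "c \<in> set st \<and> c \<noteq> hd st" using False ss by simp
    then have "re (c # r) st \<ge> 1" using re_pos_stack[OF ss] by blast
    then show ?thesis using Cons.prems(2) by simp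
  qed
qed

lemma push_list: "srt (rev A @ st) \<Longrightarrow> stack_run (A @ r) st = stack_run r (rev A @ st) \<and> re (A @ r) st = re r (rev A @ st)"
proof (induction A arbitrary: st)
  case Nil then show ?case by simp
next
  case (Cons a A)
  have s1: "srt (a # st)" using Cons.prems srt_appendD2[of "rev A" "a # st"] by simp
  have "srt (rev A @ (a # st))" using Cons.prems by simp
  then have "stack_run (A @ r) (a # st) = stack_run r (rev A @ a # st) \<and> re (A @ r) (a # st) = re r (rev A @ a # st)"
    using Cons.IH by blast
  then show ?case using s1 by (simp add: sr_push re_push)
qed

lemma pop_list: "srt (U @ c # V) \<Longrightarrow> U \<noteq> [] \<Longrightarrow> c \<notin> set U \<Longrightarrow>
   stack_run (c # r) (U @ c # V) = U @ stack_run r (c # c # V) \<and> re (c # r) (U @ c # V) = 1 + re r (c # c # V)"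
proof (induction U)
  case Nil then show ?case by simp
next
  case (Cons u U)
  have ns: "\<not> srt (c # u # U @ c # V)" using Cons.prems by auto
  have scV: "srt (c # V)" using Cons.prems(1) srt_appendD2[of "u # U" "c # V"] by simp
  then have scc: "srt (c # c # V)" by simp
  show ?case
  proof (cases "U = []")
    case True
    have "stack_run (c # r) (c # V) = stack_run r (c # c # V)" using scc by (simp add: sr_push)
    moreover have "re (c # r) (c # V) = re r (c # c # V)" using scc by (simp add: re_push)
    ultimately show ?thesis using ns True by (simp add: sr_pop re_pop)
  next
    case False
    have "hd (U @ c # V) \<noteq> c" using False Cons.prems(3) by (cases U) auto
    moreover have "stack_run (c # r) (U @ c # V) = U @ stack_run r (c # c # V) \<and> re (c # r) (U @ c # V) = 1 + re r (c # c # V)"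
      using Cons.IH Cons.prems False by auto
    ultimately show ?thesis using ns by (simp add: sr_pop re_pop)
  qed
qed




lemma rc_app_le: "rc (xs @ ys) \<le> rc xs + rc ys"
  using rc_append[of xs ys] by linarith

lemma phi_pot: "rc (phi_aba w) + re w [] \<le> rc w"
  using pot[of "[]" w] by (simp add: phi_aba_def)

lemma set_phi: "set (phi_aba w) = set w"
  by (simp add: phi_aba_def set_sr)

lemma set_phi_pow: "set ((phi_aba ^^ k) w) = set w"
  by (induction k) (simp_all add: set_phi)

lemma re_pos: "\<not> srt w \<Longrightarrow> re w [] \<ge> 1"
  using re_zero_srt[of "[]" w] by fastforce

lemma srt_phi: "srt w \<Longrightarrow> srt (phi_aba w)"
proof -
  assume "srt w"
  then have "rc w = card (set w)" by (rule srt_rc)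
  moreover have "rc (phi_aba w) \<le> rc w" using phi_pot[of w] by linarith
  moreover have "card (set (phi_aba w)) \<le> rc (phi_aba w)" by (rule card_le_rc)
  ultimately have "rc (phi_aba w) = card (set (phi_aba w))" using set_phi[of w] by simp
  then show ?thesis by (rule rc_srt)
qed

lemma phi_dec: "\<not> srt (phi_aba w) \<Longrightarrow> rc (phi_aba w) + 1 \<le> rc w"
proof -
  assume "\<not> srt (phi_aba w)"
  then have "\<not> srt w" using srt_phi by blast
  then have "re w [] \<ge> 1" by (rule re_pos)
  then show ?thesis using phi_pot[of w] by linarith
qed

lemma chain: "\<not> srt ((phi_aba ^^ k) w) \<Longrightarrow> rc ((phi_aba ^^ k) w) + k \<le> rc w"
proof (induction k)
  case 0 then show ?case by simp
next
  case (Suc k)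
  have h: "\<not> srt (phi_aba ((phi_aba ^^ k) w))" using Suc.prems by simp
  then have "\<not> srt ((phi_aba ^^ k) w)" using srt_phi by blast
  then have "rc ((phi_aba ^^ k) w) + k \<le> rc w" by (rule Suc.IH)
  moreover have "rc (phi_aba ((phi_aba ^^ k) w)) + 1 \<le> rc ((phi_aba ^^ k) w)" using h by (rule phi_dec)
  ultimately show ?case by simp
qed

lemma srt_pow: "srt w \<Longrightarrow> srt ((phi_aba ^^ k) w)"
  by (induction k) (simp_all add: srt_phi)

lemma single_distinct: "distinct xs \<Longrightarrow> set xs = {a} \<Longrightarrow> xs = [a]"
proof -
  assume d: "distinct xs" and s: "set xs = {a}"
  then have "length xs = 1" using distinct_card[OF d] by simp
  then obtain x where "xs = [x]" by (cases xs) auto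
  then show ?thesis using s by simp
qed




lemma claim:
  "length \<tau> = d \<Longrightarrow> 1 \<le> d \<Longrightarrow> distinct \<tau> \<Longrightarrow> distinct \<rho> \<Longrightarrow> set \<rho> = set \<tau> \<Longrightarrow>
   srt S1 \<Longrightarrow> srt S2 \<Longrightarrow> srt S3 \<Longrightarrow>
   set S1 \<inter> set S2 = {} \<Longrightarrow> set S1 \<inter> set S3 = {} \<Longrightarrow> set S2 \<inter> set S3 = {} \<Longrightarrow>
   set \<tau> \<inter> (set S1 \<union> set S2 \<union> set S3) = {} \<Longrightarrow>
   \<not> srt ((phi_aba ^^ (d - 1)) (S1 @ \<tau> @ S2 @ \<rho> @ S3)) \<Longrightarrow> \<rho> = \<tau>"
proof (induction d arbitrary: \<tau> \<rho> S1 S2 S3)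
  case 0 then show ?case by simp
next
  case (Suc d')
  note P = Suc.prems
  show ?case
  proof (cases "d' = 0")
    case True
    then obtain a where ta: "\<tau> = [a]" using P(1) by (cases \<tau>) auto
    then show ?thesis using single_distinct[OF P(4)] P(5) by simp
  next
    case False
    define w where "w = S1 @ \<tau> @ S2 @ \<rho> @ S3"
    have lr: "length \<rho> = Suc d'" using P(1,3,4,5) distinct_card by metis
    obtain t0 \<tau>' where tt: "\<tau> = t0 # \<tau>'" using P(1) by (cases \<tau>) auto
    obtain r0 \<rho>' where rr: "\<rho> = r0 # \<rho>'" using lr by (cases \<rho>) auto
    define M where "M = (if S2 = [] \<and> last \<tau> = hd \<rho> then 1 else (0::nat))"
    have cardw: "card (set w) = card (set S1) + card (set S2) + card (set S3) + Suc d'"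
    proof -
      have "set w = set S1 \<union> set S2 \<union> set S3 \<union> set \<tau>" unfolding w_def using P(5) by auto
      moreover have "card (set \<tau>) = Suc d'" using P(1,3) distinct_card by metis
      ultimately show ?thesis using P(9-12)
        by (simp add: card_Un_disjoint Int_Un_distrib Int_Un_distrib2 Int_commute)
    qed
    have rcw: "rc w + M \<le> card (set S1) + card (set S2) + card (set S3) + 2 * Suc d'"
    proof -
      have m: "rc (\<tau> @ S2 @ \<rho>) + M \<le> rc \<tau> + rc S2 + rc \<rho>"
      proof (cases "S2 = []")
        case True
        then show ?thesis using rc_append[of \<tau> \<rho>] tt rr by (simp add: M_def)
      next
        case False
        then show ?thesis using rc_app_le[of \<tau> "S2 @ \<rho>"] rc_app_le[of S2 \<rho>] by (simp add: M_def)
      qed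
      have "rc w \<le> rc S1 + rc (\<tau> @ S2 @ \<rho>) + rc S3"
        using rc_app_le[of S1 "(\<tau> @ S2 @ \<rho>) @ S3"] rc_app_le[of "\<tau> @ S2 @ \<rho>" S3] unfolding w_def by simp
      then have x: "rc w + M \<le> rc S1 + rc \<tau> + rc S2 + rc \<rho> + rc S3" using m by linarith
      have "rc S1 = card (set S1)" "rc S2 = card (set S2)" "rc S3 = card (set S3)"
        using P(6,7,8) srt_rc by blast+
      moreover have "rc \<tau> = Suc d'" "rc \<rho> = Suc d'" using distinct_rc P(1,3,4) lr by metis+
      ultimately show ?thesis using x by simp
    qed
    have dd: "d' = Suc (d' - 1)" using False by simp
    have fe: "(phi_aba ^^ d') w = (phi_aba ^^ (d' - 1)) (phi_aba w)"
      by (subst dd) (simp only: funpow_Suc_right o_apply)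
    have uns: "\<not> srt ((phi_aba ^^ (d' - 1)) (phi_aba w))"
      using P(13) fe unfolding w_def by simp
    have "rc ((phi_aba ^^ (d' - 1)) (phi_aba w)) + (d' - 1) \<le> rc (phi_aba w)" using uns by (rule chain)
    moreover have "card (set ((phi_aba ^^ (d' - 1)) (phi_aba w))) + 1 \<le> rc ((phi_aba ^^ (d' - 1)) (phi_aba w))"
      using uns by (rule unsrt_rc)
    moreover have "card (set ((phi_aba ^^ (d' - 1)) (phi_aba w))) = card (set w)"
      by (simp add: set_phi_pow set_phi)
    ultimately have rcphi: "card (set w) + d' \<le> rc (phi_aba w)" using False by linarith
    have wuns: "\<not> srt w" using uns srt_pow srt_phi by blast
    have re1: "re w [] \<ge> 1" using wuns by (rule re_pos)
    have "rc (phi_aba w) + re w [] \<le> rc w" by (rule phi_pot)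
    moreover have "2 * Suc d' = d' + d' + 2" by simp
    ultimately have reM: "re w [] + M \<le> 1" using rcphi rcw cardw by linarith
    then have M0: "M = 0" and re_eq: "re w [] = 1" using re1 by linarith+
    have stk: "srt (rev (S1 @ \<tau> @ S2) @ [])"
    proof -
      have "srt (rev S2 @ rev \<tau> @ rev S1)"
        apply (rule srt_append)
          apply (simp add: srt_rev P(7))
         apply (rule srt_append)
        using P(3,6,9-12) by (auto simp: srt_rev distinct_srt)
      then show ?thesis by simp
    qed
    have push: "stack_run w [] = stack_run (\<rho> @ S3) (rev (S1 @ \<tau> @ S2) @ []) \<and> re w [] = re (\<rho> @ S3) (rev (S1 @ \<tau> @ S2) @ [])"
      using push_list[OF stk, of "\<rho> @ S3"] unfolding w_def by simp
    have "r0 \<in> set \<tau>" using P(5) rr by auto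
    then obtain m where m: "m < Suc d'" "\<tau> ! m = r0" using P(1) by (metis in_set_conv_nth)
    have tsplit: "\<tau> = take m \<tau> @ r0 # drop (Suc m) \<tau>" using m P(1) by (metis id_take_nth_drop)
    define U where "U = rev S2 @ rev (drop (Suc m) \<tau>)"
    define V where "V = rev (take m \<tau>) @ rev S1"
    have stkeq: "rev (S1 @ \<tau> @ S2) @ [] = U @ r0 # V"
      unfolding U_def V_def by (subst tsplit) simp
    have Une: "U \<noteq> []"
    proof
      assume "U = []"
      then have "S2 = []" "drop (Suc m) \<tau> = []" unfolding U_def by auto
      then have "last \<tau> = r0" using tsplit by (metis append_Nil2 last_snoc)
      then have "M = 1" using \<open>S2 = []\<close> rr unfolding M_def by simp
      then show False using M0 by simp
    qed
    have r0U: "r0 \<notin> set U"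
    proof -
      have "r0 \<notin> set S2" using \<open>r0 \<in> set \<tau>\<close> P(12) by auto
      moreover have "r0 \<notin> set (drop (Suc m) \<tau>)" using P(3) tsplit
        by (metis distinct.simps(2) distinct_append)
      ultimately show ?thesis unfolding U_def by simp
    qed
    have srtUV: "srt (U @ r0 # V)" using stk stkeq by simp
    have pop: "stack_run (r0 # \<rho>' @ S3) (U @ r0 # V) = U @ stack_run (\<rho>' @ S3) (r0 # r0 # V) \<and>
        re (r0 # \<rho>' @ S3) (U @ r0 # V) = 1 + re (\<rho>' @ S3) (r0 # r0 # V)"
      using pop_list[OF srtUV Une r0U] by simp
    have re0: "re (\<rho>' @ S3) (r0 # r0 # V) = 0" using pop push re_eq stkeq rr by simp
    have srtV: "srt (r0 # r0 # V)" using srtUV srt_appendD2[of U "r0 # V"] by simp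
    have srt2: "srt (rev (r0 # r0 # V) @ \<rho>' @ S3)" using re_zero_srt[OF srtV re0] .
    have m0: "m = 0"
    proof (rule ccontr)
      assume "m \<noteq> 0"
      then have t0in: "t0 \<in> set (take m \<tau>)" using tt by (cases m) auto
      have t0r0: "t0 \<noteq> r0" using m P(3) \<open>m \<noteq> 0\<close> tt by (metis nth_Cons_0 nth_eq_iff_index_eq P(1) zero_less_Suc)
      have "t0 \<in> set \<rho>'" using P(5) tt rr t0r0 by auto
      have eq: "rev (r0 # r0 # V) @ \<rho>' @ S3 = (S1 @ take m \<tau>) @ r0 # (r0 # \<rho>' @ S3)"
        unfolding V_def by simp
      show False using srt_aba[of "S1 @ take m \<tau>" r0 "r0 # \<rho>' @ S3" t0] srt2 t0in \<open>t0 \<in> set \<rho>'\<close> t0r0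
        unfolding eq by auto
    qed
    then have r0t0: "r0 = t0" using m tt by simp
    have Vd: "V = rev S1" unfolding V_def using m0 by simp
    have Ud: "U = rev S2 @ rev \<tau>'" unfolding U_def using m0 tt by simp
    have t0S: "t0 \<notin> set S1" "t0 \<notin> set S2" "t0 \<notin> set S3" using P(12) tt by auto
    have t0r: "t0 \<notin> set \<rho>'" using P(4) rr r0t0 by simp
    have setr: "set \<rho>' = set \<tau>'" using P(3,4,5) tt rr r0t0 by auto
    have stk2: "srt (rev (\<rho>' @ S3) @ r0 # r0 # V)"
    proof -
      have a: "srt (t0 # t0 # rev S1)" using t0S P(6) by (simp add: srt_rev)
      have b: "srt (rev \<rho>' @ t0 # t0 # rev S1)"
        apply (rule srt_append)
        using P(4) rr a t0r setr P(12) tt by (auto simp: distinct_srt)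
      have "srt (rev S3 @ rev \<rho>' @ t0 # t0 # rev S1)"
        apply (rule srt_append)
        using b P(8,10) setr P(12) t0S tt by (auto simp: srt_rev)
      then show ?thesis using Vd r0t0 by simp
    qed
    have push2: "stack_run (\<rho>' @ S3) (r0 # r0 # V) = rev (\<rho>' @ S3) @ r0 # r0 # V"
      using push_list[OF stk2, of "[]"] by (simp add: sr_nil)
    have phiw: "phi_aba w = rev S2 @ rev \<tau>' @ rev S3 @ rev \<rho>' @ t0 # t0 # rev S1"
      unfolding phi_aba_def using push pop push2 stkeq rr Ud Vd r0t0 by simp
    have IH: "rev \<rho>' = rev \<tau>'"
    proof (rule Suc.IH[of "rev \<tau>'" "rev \<rho>'" "rev S2" "rev S3" "t0 # t0 # rev S1"])
      show "length (rev \<tau>') = d'" using P(1) tt by simp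
      show "1 \<le> d'" using False by simp
      show "distinct (rev \<tau>')" using P(3) tt by simp
      show "distinct (rev \<rho>')" using P(4) rr by simp
      show "set (rev \<rho>') = set (rev \<tau>')" using setr by simp
      show "srt (rev S2)" "srt (rev S3)" using P(7,8) by (simp_all add: srt_rev)
      show "srt (t0 # t0 # rev S1)" using t0S P(6) by (simp add: srt_rev)
      show "set (rev S2) \<inter> set (rev S3) = {}" using P(11) by simp
      show "set (rev S2) \<inter> set (t0 # t0 # rev S1) = {}" using P(9) t0S by auto
      show "set (rev S3) \<inter> set (t0 # t0 # rev S1) = {}" using P(10) t0S by auto
      show "set (rev \<tau>') \<inter> (set (rev S2) \<union> set (rev S3) \<union> set (t0 # t0 # rev S1)) = {}"
        using P(12) P(3) tt by auto
      have "(phi_aba ^^ (d' - 1)) (phi_aba w) = (phi_aba ^^ (d' - 1)) (rev S2 @ rev \<tau>' @ rev S3 @ rev \<rho>' @ t0 # t0 # rev S1)"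
        using phiw by simp
      then show "\<not> srt ((phi_aba ^^ (d' - 1)) (rev S2 @ rev \<tau>' @ rev S3 @ rev \<rho>' @ t0 # t0 # rev S1))"
        using uns by simp
    qed
    then show ?thesis using tt rr r0t0 by simp
  qed
qed




lemma first_dup: "\<not> distinct xs \<Longrightarrow> \<exists>\<tau> c r. xs = \<tau> @ c # r \<and> distinct \<tau> \<and> c \<in> set \<tau>"
proof (induction xs rule: rev_induct)
  case Nil then show ?case by simp
next
  case (snoc y ys)
  show ?case
  proof (cases "distinct ys")
    case True
    then have "y \<in> set ys" using snoc.prems by simp
    then show ?thesis using True by (intro exI[of _ ys] exI[of _ y] exI[of _ "[]"]) simp
  next
    case False
    then obtain \<tau> c r where "ys = \<tau> @ c # r" "distinct \<tau>" "c \<in> set \<tau>" using snoc.IH by blast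
    then show ?thesis by (intro exI[of _ \<tau>] exI[of _ c] exI[of _ "r @ [y]"]) simp
  qed
qed

theorem theorem1:
  fixes p :: "'a list"
  assumes "num_letters p \<ge> 3"
    and "length p \<le> 2 * num_letters p"
    and "\<not> sorted_partition ((phi_aba ^^ (num_letters p - 1)) p)"
  shows "\<exists>as :: 'a list. distinct as \<and> length as = num_letters p \<and> equivalent p (as @ as)"
proof -
  define N where "N = card (set p)"
  have N3: "N \<ge> 3" using assms(1) unfolding N_def num_letters_def .
  have lenp: "length p \<le> 2 * N" using assms(2) unfolding N_def num_letters_def .
  have uns: "\<not> srt ((phi_aba ^^ (N - 1)) p)" using assms(3) unfolding N_def num_letters_def sorted_srt .
  have c1: "rc ((phi_aba ^^ (N - 1)) p) + (N - 1) \<le> rc p" using uns by (rule chain)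
  have c2: "card (set ((phi_aba ^^ (N - 1)) p)) + 1 \<le> rc ((phi_aba ^^ (N - 1)) p)" using uns by (rule unsrt_rc)
  have c3: "card (set ((phi_aba ^^ (N - 1)) p)) = N" unfolding N_def by (simp add: set_phi_pow)
  have rcle: "rc p \<le> length p" by (rule rc_le_length)
  have rcp: "rc p = 2 * N" and lp: "length p = 2 * N" using c1 c2 c3 rcle lenp N3 by linarith+
  have dd: "N - 1 = Suc (N - 2)" using N3 by simp
  have fe: "(phi_aba ^^ (N - 1)) p = (phi_aba ^^ (N - 2)) (phi_aba p)"
    by (subst dd) (simp only: funpow_Suc_right o_apply)
  have uns2: "\<not> srt ((phi_aba ^^ (N - 2)) (phi_aba p))" using uns fe by simp
  have d1: "rc ((phi_aba ^^ (N - 2)) (phi_aba p)) + (N - 2) \<le> rc (phi_aba p)" using uns2 by (rule chain)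
  have d2: "card (set ((phi_aba ^^ (N - 2)) (phi_aba p))) + 1 \<le> rc ((phi_aba ^^ (N - 2)) (phi_aba p))" using uns2 by (rule unsrt_rc)
  have d3: "card (set ((phi_aba ^^ (N - 2)) (phi_aba p))) = N" unfolding N_def by (simp add: set_phi_pow set_phi)
  have pp: "rc (phi_aba p) + re p [] \<le> rc p" by (rule phi_pot)
  have re1: "re p [] \<le> 1" using d1 d2 d3 pp rcp N3 by linarith
  have "\<not> distinct p"
  proof
    assume "distinct p"
    then have "length p = N" unfolding N_def by (simp add: distinct_card)
    then show False using lp N3 by simp
  qed
  then obtain \<tau> c r where p: "p = \<tau> @ c # r" and dt: "distinct \<tau>" and ct: "c \<in> set \<tau>"
    using first_dup by blast
  have stk: "srt (rev \<tau> @ [])" using dt by (simp add: distinct_srt)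
  have push: "stack_run p [] = stack_run (c # r) (rev \<tau> @ []) \<and> re p [] = re (c # r) (rev \<tau> @ [])"
    using push_list[OF stk, of "c # r"] p by simp
  obtain m where m: "m < length \<tau>" "\<tau> ! m = c" using ct by (metis in_set_conv_nth)
  have tsplit: "\<tau> = take m \<tau> @ c # drop (Suc m) \<tau>" using m by (metis id_take_nth_drop)
  define U where "U = rev (drop (Suc m) \<tau>)"
  define V where "V = rev (take m \<tau>)"
  have stkeq: "rev \<tau> @ [] = U @ c # V" unfolding U_def V_def by (subst tsplit) simp
  have rc_split: "rc p + (if \<tau> \<noteq> [] \<and> last \<tau> = c then 1 else 0) = rc \<tau> + rc (c # r)"
    using rc_append[of \<tau> "c # r"] p by simp
  have rct: "rc \<tau> \<le> length \<tau>" "rc (c # r) \<le> length (c # r)" by (rule rc_le_length)+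
  have lsum: "length p = length \<tau> + length (c # r)" using p by simp
  have Une: "U \<noteq> []"
  proof
    assume "U = []"
    then have "drop (Suc m) \<tau> = []" unfolding U_def by simp
    then have "last \<tau> = c" using tsplit by (metis append_Nil2 last_snoc)
    moreover have "\<tau> \<noteq> []" using ct by auto
    ultimately have "rc p + 1 = rc \<tau> + rc (c # r)" using rc_split by simp
    then show False using rct lsum rcp lp by linarith
  qed
  have cU: "c \<notin> set U" unfolding U_def using dt tsplit by (metis distinct.simps(2) distinct_append set_rev)
  have srtUV: "srt (U @ c # V)" using stk stkeq by simp
  have pop: "re (c # r) (U @ c # V) = 1 + re r (c # c # V)"
    using pop_list[OF srtUV Une cU] by simp
  have re0: "re r (c # c # V) = 0" using pop push re1 stkeq by simp
  have srtV: "srt (c # c # V)" using srtUV srt_appendD2[of U "c # V"] by simp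
  have "srt (rev (c # c # V) @ r)" using re_zero_srt[OF srtV re0] .
  then have "srt ((rev V @ [c]) @ (c # r))" by simp
  then have scr: "srt (c # r)" by (rule srt_appendD2)
  have rccr: "rc (c # r) = length (c # r)" using rc_split rct lsum rcp lp by linarith
  have dcr: "distinct (c # r)"
    using srt_rc[OF scr] rccr card_distinct by metis
  have sub1: "set (c # r) \<subseteq> set p" "set \<tau> \<subseteq> set p" using p by auto
  have "length (c # r) \<le> N" using card_mono[OF _ sub1(1)] distinct_card[OF dcr] unfolding N_def by simp
  moreover have "length \<tau> \<le> N" using card_mono[OF _ sub1(2)] distinct_card[OF dt] unfolding N_def by simp
  ultimately have lt: "length \<tau> = N" and lr: "length (c # r) = N" using lsum lp by linarith+
  have st: "set \<tau> = set p" using card_subset_eq[OF _ sub1(2)] distinct_card[OF dt] lt unfolding N_def by simp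
  have sr: "set (c # r) = set p" using card_subset_eq[OF _ sub1(1)] distinct_card[OF dcr] lr unfolding N_def by simp
  have "c # r = \<tau>"
  proof (rule claim[of \<tau> N "c # r" "[]" "[]" "[]"])
    show "length \<tau> = N" by (rule lt)
    show "1 \<le> N" using N3 by simp
    show "distinct \<tau>" by (rule dt)
    show "distinct (c # r)" by (rule dcr)
    show "set (c # r) = set \<tau>" using st sr by simp
  qed (use uns p in simp_all)
  then have "p = \<tau> @ \<tau>" using p by simp
  moreover have "equivalent p (\<tau> @ \<tau>)" unfolding equivalent_def
    using \<open>p = \<tau> @ \<tau>\<close> by (intro exI[of _ id]) simp
  ultimately show ?thesis using dt lt unfolding num_letters_def N_def by blast
qed


end
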